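(* Let $p$ be a prime and $r \in \mathbb{N}$ with $r\ge 2$. Let $k \in \mathbb{N}$ and let $m \in \mathbb{N}$ such that $r(p-1)+1< 2p^m$. Then \[\mathsf{D}_k(C_p^r)\le \min \{(k(r-1)+1)p - r+1,\ (k-1)p^m + r(p-1)+1\}.\]
   Context: $C_p^r$ is the elementary abelian $p$-group of rank $r$. A sequence over a finite abelian group $G$ is a finite unordered list of elements with repetitions; zero-sum means its terms sum to $0$. $\mathsf{D}_k(G)$ is the smallest $\ell$ such that every sequence over $G$ of length at least $\ell$ has $k$ disjoint non-empty zero-sum subsequences. *)

theory Defs
  imports Main "HOL-Library.Multiset" "HOL-Computational_Algebra.Primes"
begin

text \<open>The elementary abelian group C_p^r, realised as Z_p^r: vectors
  f :: nat => nat with f i < p for i < r and f i = 0 for i >= r;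
  the group operation is coordinatewise addition modulo p.\<close>
definition elem_ab :: "nat \<Rightarrow> nat \<Rightarrow> (nat \<Rightarrow> nat) set" where
  "elem_ab p r = {f. (\<forall>i<r. f i < p) \<and> (\<forall>i\<ge>r. f i = 0)}"

definition zero_sum :: "nat \<Rightarrow> nat \<Rightarrow> (nat \<Rightarrow> nat) multiset \<Rightarrow> bool" where
  "zero_sum p r S \<longleftrightarrow> (\<forall>i<r. (\<Sum>x\<in>#S. x i) mod p = 0)"

definition has_k_disjoint_zs :: "nat \<Rightarrow> nat \<Rightarrow> nat \<Rightarrow> (nat \<Rightarrow> nat) multiset \<Rightarrow> bool" where
  "has_k_disjoint_zs p r k S \<longleftrightarrow>
     (\<exists>T :: nat \<Rightarrow> (nat \<Rightarrow> nat) multiset.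
        (\<Sum>j<k. T j) \<subseteq># S \<and> (\<forall>j<k. T j \<noteq> {#} \<and> zero_sum p r (T j)))"

definition Dk :: "nat \<Rightarrow> nat \<Rightarrow> nat \<Rightarrow> nat" where
  "Dk k p r = (LEAST l. \<forall>S. set_mset S \<subseteq> elem_ab p r \<and> size S \<ge> l \<longrightarrow> has_k_disjoint_zs p r k S)"

end

theory Submission
  imports Defs "HOL-Number_Theory.Residues"
begin

inductive lowdeg :: "nat \<Rightarrow> (nat set \<Rightarrow> int) \<Rightarrow> bool" where
  mono: "finite V \<Longrightarrow> card V \<le> d \<Longrightarrow> lowdeg d (\<lambda>T. if V \<subseteq> T then c else 0)"
| add: "lowdeg d f \<Longrightarrow> lowdeg d g \<Longrightarrow> lowdeg d (\<lambda>T. f T + g T)"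

lemma lowdeg_const: "lowdeg d (\<lambda>T. c)"
  using lowdeg.mono[of "{}" d c] by simp

lemma lowdeg_deg_mono: "lowdeg d f \<Longrightarrow> d \<le> e \<Longrightarrow> lowdeg e f"
  by (induction rule: lowdeg.induct) (auto intro: lowdeg.intros)

lemma lowdeg_mult_mono:
  assumes "lowdeg e g" "finite V" "card V \<le> d"
  shows "lowdeg (d+e) (\<lambda>T. (if V \<subseteq> T then c else 0) * g T)"
  using assms(1)
proof (induction rule: lowdeg.induct)
  case (mono W e c')
  have "(\<lambda>T. (if V \<subseteq> T then c else 0) * (if W \<subseteq> T then c' else 0)) = (\<lambda>T. if V \<union> W \<subseteq> T then c*c' else 0)"
    by auto
  moreover have "card (V \<union> W) \<le> d + e"
    using card_Un_le[of V W] mono assms by linarith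
  ultimately show ?case using mono assms by (metis finite_Un lowdeg.mono)
next
  case (add e f g)
  then show ?case using lowdeg.add[OF add.IH] by (simp add: distrib_left)
qed

lemma lowdeg_mult:
  assumes "lowdeg d f" "lowdeg e g"
  shows "lowdeg (d+e) (\<lambda>T. f T * g T)"
  using assms(1)
proof (induction rule: lowdeg.induct)
  case (mono V d c)
  then show ?case using lowdeg_mult_mono[OF assms(2)] by blast
next
  case (add d f h)
  then show ?case using lowdeg.add[OF add.IH] by (simp add: distrib_right)
qed

lemma lowdeg_scale: "lowdeg d f \<Longrightarrow> lowdeg d (\<lambda>T. c * f T)"
  using lowdeg_mult[OF lowdeg_const[of 0 c]] by simp

lemma lowdeg_diff: "lowdeg d f \<Longrightarrow> lowdeg d g \<Longrightarrow> lowdeg d (\<lambda>T. f T - g T)"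
  using lowdeg.add[of d f "\<lambda>T. (-1) * g T"] lowdeg_scale[of d g "-1"] by simp

lemma lowdeg_sum: "finite I \<Longrightarrow> (\<And>i. i \<in> I \<Longrightarrow> lowdeg d (f i)) \<Longrightarrow> lowdeg d (\<lambda>T. \<Sum>i\<in>I. f i T)"
proof (induction I rule: finite_induct)
  case empty
  then show ?case using lowdeg_const[of d 0] by simp
next
  case (insert x F)
  then show ?case using lowdeg.add[of d "f x" "\<lambda>T. \<Sum>i\<in>F. f i T"] by simp
qed

lemma lowdeg_prod: "(\<And>i. i < n \<Longrightarrow> lowdeg d (f i)) \<Longrightarrow> lowdeg (n*d) (\<lambda>T. \<Prod>i<n. f i T)"
proof (induction n)
  case 0
  then show ?case using lowdeg_const[of 0 1] by simp
next
  case (Suc n)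
  then have "lowdeg (n*d + d) (\<lambda>T. (\<Prod>i<n. f i T) * f n T)"
    using lowdeg_mult[of "n*d" _ d "f n"] by simp
  then show ?case by (simp add: add.commute mult.commute)
qed

lemma lowdeg_power: "lowdeg d f \<Longrightarrow> lowdeg (n*d) (\<lambda>T. f T ^ n)"
  using lowdeg_prod[of n d "\<lambda>_. f"] by simp

lemma alt_sum_supersets:
  assumes "finite U" "V \<subset> U"
  shows "(\<Sum>T | T \<subseteq> U \<and> V \<subseteq> T. (-1::int) ^ card T) = 0"
  using assms by (simp add: sum_alternating_cancels card_subsupersets_even_odd)

lemma lowdeg_cancel:
  assumes "lowdeg d f" "finite U" "d < card U"
  shows "(\<Sum>T\<in>Pow U. (-1) ^ card T * f T) = 0"
  using assms(1,3)
proof (induction rule: lowdeg.induct)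
  case (mono V d c)
  have "(\<Sum>T\<in>Pow U. (-1) ^ card T * (if V \<subseteq> T then c else 0)) = (\<Sum>T\<in>{T. T \<subseteq> U \<and> V \<subseteq> T}. (-1) ^ card T * c)"
    using assms(2) by (intro sum.mono_neutral_cong_right) auto
  also have "\<dots> = (\<Sum>T | T \<subseteq> U \<and> V \<subseteq> T. (-1::int) ^ card T) * c"
    by (simp add: sum_distrib_right)
  also have "\<dots> = 0"
  proof (cases "V \<subseteq> U")
    case True
    then have "V \<subset> U" using mono by auto
    then show ?thesis using alt_sum_supersets[OF assms(2)] by simp
  next
    case False
    then have "{T. T \<subseteq> U \<and> V \<subseteq> T} = {}" by auto
    then show ?thesis by (simp only: sum.empty mult_zero_left)
  qed
  finally show ?case .
next
  case (add d f g)
  then show ?case by (simp add: distrib_left sum.distrib)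
qed

lemma alt_partial:
  "(\<Sum>j<Suc k. (-1)^j * int (Suc n choose j)) = (-1)^k * int (n choose k)"
proof (induction k)
  case 0
  then show ?case by simp
next
  case (Suc k)
  have "(\<Sum>j<Suc (Suc k). (-1)^j * int (Suc n choose j))
      = (-1)^k * int (n choose k) + (-1)^(Suc k) * int (Suc n choose Suc k)"
    using Suc by simp
  also have "\<dots> = (-1)^(Suc k) * int (n choose Suc k)"
    by (simp add: algebra_simps)
  finally show ?case .
qed

lemma binom_dvd:
  assumes "prime p" "q = p^m" "n \<ge> 1" "\<not> q dvd n"
  shows "p dvd ((n-1) choose (q-1))"
proof (rule ccontr)
  assume nd: "\<not> p dvd ((n-1) choose (q-1))"
  have q1: "q \<ge> 1" using assms prime_gt_0_nat by (simp add: Suc_le_eq)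
  have "Suc (n-1) * ((n-1) choose (q-1)) = (Suc (n-1) choose Suc (q-1)) * Suc (q-1)"
    by (rule Suc_times_binomial_eq)
  moreover have a: "Suc (n-1) = n" using assms by simp
  moreover have b: "Suc (q-1) = q" using q1 by simp
  ultimately have eq: "n * ((n-1) choose (q-1)) = (n choose q) * q" by metis
  have "coprime p ((n-1) choose (q-1))" using nd assms(1) prime_imp_coprime by blast
  then have cop: "coprime q ((n-1) choose (q-1))" using assms(2) by simp
  have "q dvd n * ((n-1) choose (q-1))" using eq by simp
  then have "q dvd n" using cop coprime_dvd_mult_left_iff by blast
  then show False using assms by simp
qed

lemma fermat_int:
  assumes "prime p" "\<not> p dvd a"
  shows "int p dvd 1 - int a ^ (p-1)"
proof -
  have "[a ^ (p - 1) = 1] (mod p)" using fermat_theorem assms by blast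
  then have "int (a^(p-1)) mod int p = int 1 mod int p"
    unfolding cong_def by (metis of_nat_mod)
  then have "int p dvd int (a^(p-1)) - 1" using mod_eq_dvd_iff by force
  then show ?thesis by (metis dvd_minus_iff minus_diff_eq of_nat_power)
qed

lemma idx_exists:
  fixes xs :: "(nat \<Rightarrow> nat) list"
  assumes p: "prime p" and q: "q = p^j"
  shows "\<exists>T \<subseteq> {..<r*(p-1)+q}. T \<noteq> {} \<and> (\<forall>i<r. p dvd (\<Sum>t\<in>T. (xs!t) i)) \<and> q dvd card T"
proof (rule ccontr)
  assume neg: "\<not> ?thesis"
  define l where "l = r*(p-1)+q"
  define U where "U = {..<l}"
  have q1: "q \<ge> 1" using p q prime_gt_0_nat by (simp add: Suc_le_eq)
  have p2: "p \<ge> 2" using p prime_ge_2_nat by blast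
  have finU: "finite U" unfolding U_def by simp
  have cardU: "card U = l" unfolding U_def by simp
  define s where "s i T = (\<Sum>t\<in>U. (if {t} \<subseteq> T then int ((xs!t) i) else 0))" for i T
  define P where "P T = (\<Prod>i<r. 1 - s i T ^ (p-1))" for T
  define w where "w T = (\<Sum>j<q. (-1::int)^j * (\<Sum>W\<in>{W. W \<subseteq> U \<and> card W = j}. (if W \<subseteq> T then 1 else 0)))" for T
  define F where "F T = P T * w T" for T
  have ls: "lowdeg 1 (s i)" for i
    unfolding s_def[abs_def]
  proof (intro lowdeg_sum[OF finU])
    fix t show "lowdeg 1 (\<lambda>T. if {t} \<subseteq> T then int ((xs!t) i) else 0)"
      by (rule lowdeg.mono) auto
  qed
  have "lowdeg (r * (p-1)) P"
    unfolding P_def[abs_def]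
  proof (rule lowdeg_prod)
    fix i assume "i < r"
    have "lowdeg ((p-1)*1) (\<lambda>T. s i T ^ (p-1))" using lowdeg_power[OF ls] by blast
    then show "lowdeg (p - 1) (\<lambda>T. 1 - s i T ^ (p - 1))"
      using lowdeg_diff[OF lowdeg_const] by simp
  qed
  moreover have "lowdeg (q-1) w"
    unfolding w_def[abs_def]
  proof (rule lowdeg_sum)
    fix j assume j: "j \<in> {..<q}"
    have fin: "finite {W. W \<subseteq> U \<and> card W = j}" using finU by simp
    have "lowdeg (q - 1) (\<lambda>T. \<Sum>W\<in>{W. W \<subseteq> U \<and> card W = j}. if W \<subseteq> T then 1 else 0)"
    proof (rule lowdeg_sum[OF fin])
      fix W assume "W \<in> {W. W \<subseteq> U \<and> card W = j}"
      then show "lowdeg (q - 1) (\<lambda>T. if W \<subseteq> T then 1 else 0)"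
        using j finU by (intro lowdeg.mono) (auto intro: finite_subset)
    qed
    then show "lowdeg (q - 1) (\<lambda>T. (-1::int)^j * (\<Sum>W\<in>{W. W \<subseteq> U \<and> card W = j}. if W \<subseteq> T then 1 else 0))"
      by (rule lowdeg_scale)
  qed simp
  ultimately have "lowdeg (r*(p-1) + (q-1)) F"
    unfolding F_def[abs_def] by (rule lowdeg_mult)
  then have cancel: "(\<Sum>T\<in>Pow U. (-1) ^ card T * F T) = 0"
    using lowdeg_cancel finU cardU q1 unfolding l_def by simp
  have sval: "s i T = int (\<Sum>t\<in>T. (xs!t) i)" if "T \<subseteq> U" for i T
  proof -
    have "s i T = (\<Sum>t\<in>U \<inter> T. int ((xs!t) i))"
      unfolding s_def using sum.inter_restrict[OF finU, of "\<lambda>t. int ((xs!t) i)" T] by simp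
    also have "U \<inter> T = T" using that by blast
    finally show ?thesis by simp
  qed
  have wval: "w T = (\<Sum>j<q. (-1)^j * int (card T choose j))" if "T \<subseteq> U" for T
    unfolding w_def
  proof (rule sum.cong[OF refl])
    fix j
    have fin: "finite {W. W \<subseteq> U \<and> card W = j}" using finU by simp
    have "(\<Sum>W\<in>{W. W \<subseteq> U \<and> card W = j}. (if W \<subseteq> T then 1 else 0::int))
        = (\<Sum>W\<in>{W \<in> {W. W \<subseteq> U \<and> card W = j}. W \<subseteq> T}. 1)"
      using sum.inter_filter[OF fin, of "\<lambda>_. 1::int"] by simp
    also have "{W \<in> {W. W \<subseteq> U \<and> card W = j}. W \<subseteq> T} = {W. W \<subseteq> T \<and> card W = j}"
      using that by blast
    also have "(\<Sum>W\<in>{W. W \<subseteq> T \<and> card W = j}. 1::int) = int (card T choose j)"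
      using n_subsets[of T j] finite_subset[OF that finU] by simp
    finally show "(-1)^j * (\<Sum>W\<in>{W. W \<subseteq> U \<and> card W = j}. (if W \<subseteq> T then 1 else 0))
        = (-1)^j * int (card T choose j)" by simp
  qed
  have F0: "F {} = 1"
  proof -
    have "s i {} = 0" for i using sval[of "{}" i] by simp
    then have "P {} = 1" unfolding P_def using p2 by (simp add: zero_power)
    moreover have "w {} = 1"
    proof -
      have "w {} = (\<Sum>j<q. (-1::int)^j * int (0 choose j))" using wval[of "{}"] by simp
      also have "\<dots> = (\<Sum>j<q. if j = 0 then 1 else 0)"
        by (rule sum.cong) auto
      also have "\<dots> = 1" using q1 by simp
      finally show ?thesis .
    qed
    ultimately show ?thesis unfolding F_def by simp
  qed
  have Fdvd: "int p dvd F T" if T: "T \<subseteq> U" "T \<noteq> {}" for T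
  proof (cases "\<exists>i<r. \<not> p dvd (\<Sum>t\<in>T. (xs!t) i)")
    case True
    then obtain i where i: "i < r" "\<not> p dvd (\<Sum>t\<in>T. (xs!t) i)" by blast
    have "int p dvd 1 - s i T ^ (p-1)" using fermat_int[OF p i(2)] sval[OF T(1)] by simp
    also have "\<dots> dvd P T" unfolding P_def using i(1) by (intro dvd_prodI) auto
    finally show ?thesis unfolding F_def by simp
  next
    case False
    then have nq: "\<not> q dvd card T" using neg T unfolding U_def l_def by blast
    have ct: "card T \<ge> 1" using T finite_subset[OF T(1) finU] by (simp add: Suc_le_eq card_gt_0_iff)
    have "w T = (-1)^(q-1) * int ((card T - 1) choose (q-1))"
    proof -
      have "Suc (q-1) = q" "Suc (card T - 1) = card T" using q1 ct by auto
      then show ?thesis using wval[OF T(1)] alt_partial[where k="q-1" and n="card T - 1"] by metis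
    qed
    moreover have "p dvd ((card T - 1) choose (q-1))" using binom_dvd[OF p q ct nq] .
    ultimately have "int p dvd w T" by simp
    then show ?thesis unfolding F_def by simp
  qed
  have "(\<Sum>T\<in>Pow U. (-1) ^ card T * F T) = 1 + (\<Sum>T\<in>Pow U - {{}}. (-1) ^ card T * F T)"
    using finU sum.remove[of "Pow U" "{}" "\<lambda>T. (-1) ^ card T * F T"] F0 by simp
  then have eq0: "1 + (\<Sum>T\<in>Pow U - {{}}. (-1) ^ card T * F T) = 0" using cancel by simp
  have "int p dvd (\<Sum>T\<in>Pow U - {{}}. (-1) ^ card T * F T)"
    by (intro dvd_sum dvd_mult) (use Fdvd in auto)
  then have "int p dvd 1" using eq0 by (metis add.commute add_left_imp_eq dvd_minus_iff minus_unique)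
  then show False using p2 by simp
qed

lemma mset_exists:
  assumes p: "prime p" and q: "q = p^j" and sz: "r*(p-1)+q \<le> size S"
  shows "\<exists>T. T \<subseteq># S \<and> T \<noteq> {#} \<and> zero_sum p r T \<and> q dvd size T \<and> size T \<le> r*(p-1)+q"
proof -
  obtain xs where xs: "mset xs = S" using ex_mset by blast
  obtain I where I: "I \<subseteq> {..<r*(p-1)+q}" "I \<noteq> {}" "\<forall>i<r. p dvd (\<Sum>t\<in>I. (xs!t) i)" "q dvd card I"
    using idx_exists[OF p q, of r xs] by blast
  have finI: "finite I" using I(1) finite_subset by blast
  have Isub: "I \<subseteq> {..<length xs}" using I(1) sz xs by auto
  define T where "T = image_mset (nth xs) (mset_set I)"
  have "mset xs = image_mset (nth xs) (mset_set {..<length xs})"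
  proof -
    have "mset xs = mset (map (nth xs) [0..<length xs])" by (simp add: map_nth)
    also have "\<dots> = image_mset (nth xs) (mset_set {..<length xs})"
      by (simp add: atLeast0LessThan)
    finally show ?thesis .
  qed
  moreover have "mset_set I \<subseteq># mset_set {..<length xs}"
    using Isub by (intro subset_imp_msubset_mset_set) auto
  ultimately have TS: "T \<subseteq># S" unfolding T_def using xs
    by (simp add: image_mset_subseteq_mono)
  have szT: "size T = card I" unfolding T_def by simp
  have ne: "T \<noteq> {#}" unfolding T_def using finI I(2) by (simp add: mset_set_empty_iff)
  have zs: "zero_sum p r T"
    unfolding zero_sum_def
  proof (intro allI impI)
    fix i assume "i < r"
    have "(\<Sum>x\<in>#T. x i) = (\<Sum>t\<in>I. (xs!t) i)"
      unfolding T_def sum_unfold_sum_mset[of "\<lambda>t. (xs!t) i" I] by (simp add: multiset.map_comp o_def)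
    then show "(\<Sum>x\<in>#T. x i) mod p = 0" using I(3) \<open>i<r\<close> by simp
  qed
  have "card I \<le> r*(p-1)+q" using card_mono[OF _ I(1)] by simp
  then show ?thesis using I(4) TS szT ne zs by (intro exI[of _ T]) simp
qed

lemma hk0: "has_k_disjoint_zs p r 0 S"
  unfolding has_k_disjoint_zs_def by (intro exI[of _ "\<lambda>_. {#}"]) simp

lemma hk_add:
  assumes "T \<subseteq># S" "T \<noteq> {#}" "zero_sum p r T" "has_k_disjoint_zs p r k (S - T)"
  shows "has_k_disjoint_zs p r (Suc k) S"
proof -
  obtain Tf where Tf: "(\<Sum>j<k. Tf j) \<subseteq># S - T" "\<forall>j<k. Tf j \<noteq> {#} \<and> zero_sum p r (Tf j)"
    using assms(4) unfolding has_k_disjoint_zs_def by blast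
  define T' where "T' = Tf(k := T)"
  have "(\<Sum>j<Suc k. T' j) = (\<Sum>j<k. Tf j) + T"
    unfolding T'_def by (simp add: add.commute)
  also have "\<dots> \<subseteq># S - T + T" using Tf(1) by (rule subset_mset.add_right_mono)
  also have "\<dots> = S" using assms(1) by (simp add: subset_mset.diff_add)
  finally have "(\<Sum>j<Suc k. T' j) \<subseteq># S" .
  moreover have "\<forall>j<Suc k. T' j \<noteq> {#} \<and> zero_sum p r (T' j)"
    using Tf(2) assms(2,3) unfolding T'_def by (auto simp: less_Suc_eq)
  ultimately show ?thesis unfolding has_k_disjoint_zs_def by blast
qed

lemma zs_diff:
  assumes "zero_sum p r T" "zero_sum p r U" "U \<subseteq># T"
  shows "zero_sum p r (T - U)"
  unfolding zero_sum_def
proof (intro allI impI)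
  fix i assume i: "i < r"
  have "T = U + (T - U)" using assms(3) by (simp add: subset_mset.add_diff_inverse)
  then have "(\<Sum>x\<in>#T. x i) = (\<Sum>x\<in>#U. x i) + (\<Sum>x\<in>#T - U. x i)"
    by (metis image_mset_union sum_mset.union)
  moreover have "p dvd (\<Sum>x\<in>#T. x i)" "p dvd (\<Sum>x\<in>#U. x i)"
    using assms(1,2) i unfolding zero_sum_def by auto
  ultimately show "(\<Sum>x\<in>#T - U. x i) mod p = 0"
    by (simp add: dvd_add_right_iff)
qed

lemma olson:
  assumes "prime p" "r*(p-1)+1 \<le> size S"
  shows "\<exists>U. U \<subseteq># S \<and> U \<noteq> {#} \<and> zero_sum p r U"
proof -
  have "\<exists>T. T \<subseteq># S \<and> T \<noteq> {#} \<and> zero_sum p r T \<and> 1 dvd size T \<and> size T \<le> r*(p-1)+1"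
    by (rule mset_exists[OF assms(1), of 1 0 r S]) (use assms(2) in simp_all)
  then show ?thesis by blast
qed

lemma hk_split:
  assumes p: "prime p" and T: "T \<subseteq># S" "zero_sum p r T" "r*(p-1)+2 \<le> size T"
    and hk: "has_k_disjoint_zs p r k (S - T)"
  shows "has_k_disjoint_zs p r (Suc (Suc k)) S"
proof -
  have "T \<noteq> {#}" using T(3) by auto
  then obtain x where x: "x \<in># T" by blast
  define T' where "T' = T - {#x#}"
  have "size T' = size T - 1" unfolding T'_def using x by (rule size_Diff_singleton)
  then have "r*(p-1)+1 \<le> size T'" using T(3) by simp
  then obtain U where U: "U \<subseteq># T'" "U \<noteq> {#}" "zero_sum p r U" using olson[OF p] by blast
  have UT: "U \<subseteq># T" using U(1) unfolding T'_def using subset_mset.order_trans[OF _ diff_subset_eq_self] by blast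
  have "count U x \<le> count T' x" using U(1) by (simp add: mset_subset_eq_count)
  moreover have "0 < count T x" using x by simp
  moreover have "count T' x = count T x - 1" unfolding T'_def by simp
  ultimately have "count U x < count T x" by linarith
  then have c: "0 < count (T - U) x" by simp
  have ne: "T - U \<noteq> {#}"
  proof
    assume "T - U = {#}" then show False using c by simp
  qed
  have zs: "zero_sum p r (T - U)" using zs_diff[OF T(2) U(3) UT] .
  have US: "U \<subseteq># S" using UT T(1) by (rule subset_mset.order_trans)
  have sub: "T - U \<subseteq># S - U" using T(1) by (auto simp: subseteq_mset_def intro: diff_le_mono)
  have eq: "S - U - (T - U) = S - T"
  proof (rule multiset_eqI)
    fix a
    have "count U a \<le> count T a" "count T a \<le> count S a"
      using UT T(1) by (auto simp: subseteq_mset_def)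
    then show "count (S - U - (T - U)) a = count (S - T) a" by simp
  qed
  have "has_k_disjoint_zs p r (Suc k) (S - U)"
    using hk_add[OF sub ne zs] hk eq by simp
  then show ?thesis using hk_add[OF US U(2,3)] by simp
qed

lemma main_ind:
  assumes p: "prime p" and q: "q = p^j" and qc: "q \<le> c + 1"
    and cond: "\<And>n. q dvd n \<Longrightarrow> c < n \<Longrightarrow> n \<le> r*(p-1)+q \<Longrightarrow> r*(p-1)+2 \<le> n \<and> n \<le> 2*c"
  shows "r*(p-1)+1 + k*c \<le> size S \<Longrightarrow> has_k_disjoint_zs p r (Suc k) S"
proof (induction k arbitrary: S rule: less_induct)
  case (less k)
  show ?case
  proof (cases k)
    case 0
    then have "r*(p-1)+1 \<le> size S" using less.prems by simp
    then obtain U where "U \<subseteq># S" "U \<noteq> {#}" "zero_sum p r U"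
      using olson[OF p, of r S] by blast
    then show ?thesis using hk_add[OF _ _ _ hk0] 0 by blast
  next
    case (Suc k')
    have "r*(p-1)+q \<le> size S" using less.prems Suc qc by (simp add: add.assoc)
    then obtain T where T: "T \<subseteq># S" "T \<noteq> {#}" "zero_sum p r T" "q dvd size T" "size T \<le> r*(p-1)+q"
      using mset_exists[OF p q] by blast
    have szST: "size (S - T) = size S - size T" using T(1) by (rule size_Diff_submset)
    show ?thesis
    proof (cases "size T \<le> c")
      case True
      then have "r*(p-1)+1 + k'*c \<le> size (S - T)" using szST less.prems Suc by simp
      moreover have "k' < k" using Suc by simp
      ultimately have "has_k_disjoint_zs p r (Suc k') (S - T)" using less.IH by blast
      then have "has_k_disjoint_zs p r (Suc (Suc k')) S" by (rule hk_add[OF T(1,2,3)])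
      then show ?thesis using Suc by simp
    next
      case False
      then have c2: "r*(p-1)+2 \<le> size T" "size T \<le> 2*c" using cond[OF T(4) _ T(5)] by simp_all
      show ?thesis
      proof (cases k')
        case 0
        have "has_k_disjoint_zs p r (Suc (Suc 0)) S" by (rule hk_split[OF p T(1,3) c2(1) hk0])
        then show ?thesis using Suc 0 by simp
      next
        case (Suc k'')
        then have "r*(p-1)+1 + k''*c \<le> size (S - T)" using szST less.prems \<open>k = Suc k'\<close> c2 by simp
        moreover have "k'' < k" using Suc \<open>k = Suc k'\<close> by simp
        ultimately have "has_k_disjoint_zs p r (Suc k'') (S - T)" using less.IH by blast
        then have "has_k_disjoint_zs p r (Suc (Suc (Suc k''))) S" by (rule hk_split[OF p T(1,3) c2(1)])
        then show ?thesis using Suc \<open>k = Suc k'\<close> by simp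
      qed
    qed
  qed
qed

lemma Dk_le:
  assumes "\<And>S. l \<le> size S \<Longrightarrow> has_k_disjoint_zs p r k S"
  shows "Dk k p r \<le> l"
  unfolding Dk_def by (rule Least_le) (use assms in blast)

theorem proposition3p5:
  fixes p r k m :: nat
  assumes "prime p" and "r \<ge> 2" and "k \<ge> 1"
    and "r * (p - 1) + 1 < 2 * p ^ m"
  shows "int (Dk k p r) \<le> min ((int k * (int r - 1) + 1) * int p - int r + 1)
                               ((int k - 1) * int p ^ m + int r * (int p - 1) + 1)"
proof -
  note p = assms(1)
  obtain p0 where p0: "p = Suc p0" using p prime_gt_0_nat gr0_implies_Suc by blast
  obtain k0 where k0: "k = Suc k0" using assms(3) by (cases k) auto
  obtain r0 where r0: "r = Suc r0" using assms(2) by (cases r) auto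
  have cond1: "r*(p-1)+2 \<le> n \<and> n \<le> 2*((r-1)*p)"
    if n: "p^1 dvd n" "(r-1)*p < n" "n \<le> r*(p-1)+p^1" for n
  proof -
    obtain a where a: "n = p*a" using n(1) by auto
    have "(r-1)*p < a*p" using n(2) a by (simp add: mult.commute)
    then have "r - 1 < a" by simp
    moreover have "a*p < (r+1)*p" using n(3) a unfolding p0 r0 by (simp add: algebra_simps)
    then have "a < r+1" by (metis mult_less_cancel2)
    ultimately have "a = r" by simp
    have "1 \<le> r0" using assms(2) r0 by simp
    then have pr: "p0*1 \<le> p0*r0" by (rule mult_le_mono2)
    show ?thesis using a \<open>a = r\<close> \<open>1 \<le> r0\<close> unfolding p0 r0 apply (simp add: algebra_simps) using pr by linarith
  qed
  have "1 \<le> r0" using assms(2) r0 by simp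
  then have "1*p \<le> r0*p" by (rule mult_le_mono1)
  moreover have "(r-1)*p = r0*p" using r0 by simp
  ultimately have qc1: "p^1 \<le> (r-1)*p + 1" by (simp only: power_one_right mult_1)
  have "Dk k p r \<le> r*(p-1)+1 + k0*((r-1)*p)"
  proof (rule Dk_le)
    fix S :: "(nat \<Rightarrow> nat) multiset"
    assume "r*(p-1)+1 + k0*((r-1)*p) \<le> size S"
    then show "has_k_disjoint_zs p r k S" unfolding k0
      using main_ind[OF p refl qc1 cond1] by blast
  qed
  moreover
  have cond2: "r*(p-1)+2 \<le> n \<and> n \<le> 2*p^m"
    if n: "p^m dvd n" "p^m < n" "n \<le> r*(p-1)+p^m" for n
  proof -
    obtain a where a: "n = p^m*a" using n(1) by auto
    have "1*p^m < a*p^m" using n(2) a by (simp add: mult.commute)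
    then have "1 < a" by (metis mult_less_cancel2)
    moreover have "a*p^m = n" using a by (simp add: mult.commute)
    then have "a*p^m < 3*p^m" using n(3) assms(4) by linarith
    then have "a < 3" by (metis mult_less_cancel2)
    ultimately have "a = 2" by simp
    then show ?thesis using a assms(4) by simp
  qed
  have "Dk k p r \<le> r*(p-1)+1 + k0*p^m"
  proof (rule Dk_le)
    fix S :: "(nat \<Rightarrow> nat) multiset"
    assume "r*(p-1)+1 + k0*p^m \<le> size S"
    then show "has_k_disjoint_zs p r k S" unfolding k0
      using main_ind[OF p refl _ cond2, of m] by simp
  qed
  moreover have "int (r*(p-1)+1 + k0*((r-1)*p)) = (int k * (int r - 1) + 1) * int p - int r + 1"
    unfolding p0 k0 r0 by (simp add: algebra_simps)
  moreover have "int (r*(p-1)+1 + k0*p^m) = (int k - 1) * int p ^ m + int r * (int p - 1) + 1"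
    unfolding p0 k0 r0 by (simp add: algebra_simps)
  ultimately show ?thesis by linarith
qed

end
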